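(* Let $N\ge 1$ and $1\le K\le N$ be integers. A behavior $P\in\mathcal{L}_N$ is a vertex of the polytope $\mathcal{C}_{N,K}$ if and only if there is a $K$-junta $f:\{0,1\}^N\to\{0,1\}$ such that $P(a|\mathbf{x})=\delta_{a,f(\mathbf{x})}$ for all $a\in\{0,1\}$ and $\mathbf{x}\in\{0,1\}^N$. In particular, the vertices of $\mathcal{C}_{N,K}$ are in one-to-one correspondence with the $K$-juntas on $N$ variables, and their number is $$|V(\mathcal{C}_{N,K})|=\sum_{k=0}^K\binom{N}{k}\sum_{r=0}^k(-1)^{k-r}\binom{k}{r}2^{2^r}.$$
   Context: A behavior on $N$ input bits is a family $P=(P(a|\mathbf{x}))_{a\in\{0,1\},\mathbf{x}\in\{0,1\}^N}$ of real numbers with $P(a|\mathbf{x})\ge 0$ and $P(0|\mathbf{x})+P(1|\mathbf{x})=1$ for every $\mathbf{x}$; the set of all behaviors is $\mathcal{L}_N\subset\mathbb{R}^{2^{N+1}}$. $\mathcal{C}_{N,K}$ is the set of behaviors $P\in\mathcal{L}_N$ for which there exist non-negative weights $q_{j_1\cdots j_K}$ summing to one, indexed by $K$-tuples of pairwise distinct indices $j_1,\dots,j_K\in\{1,\dots,N\}$, and conditional probability distributions $P(a|x_{j_1}\cdots x_{j_K})$ on $a\in\{0,1\}$ depending only on the bits $x_{j_1},\dots,x_{j_K}$, such that $P(a|\mathbf{x})=\sum_{j_1,\dots,j_K}q_{j_1\cdots j_K}P(a|x_{j_1}\cdots x_{j_K})$ for all $a,\mathbf{x}$. It is a convex polytope.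 A Boolean function $f:\{0,1\}^N\to\{0,1\}$ is a $K$-junta if there is a subset $\{j_1,\dots,j_{N-K}\}\subseteq\{1,\dots,N\}$ of $N-K$ indices such that $f$ does not depend on $x_{j_k}$ for $k=1,\dots,N-K$ (i.e. $f$ depends on at most $K$ of its variables). *)

theory Defs
  imports Complex_Main
begin

text \<open>Inputs: bit strings x in {0,1}^N, represented as functions nat => bool
  with bits x 0, ..., x (N-1) (False = 0, True = 1) and all other values False.
  Outputs a in {0,1} are represented as bool.\<close>

definition inputs :: "nat \<Rightarrow> (nat \<Rightarrow> bool) set" where
  "inputs N = {x. \<forall>i. N \<le> i \<longrightarrow> x i = False}"

text \<open>A point of R^(2^(N+1)): a real family indexed by (a, x), a in {0,1}, x in {0,1}^N,
  represented as a function that is zero outside the index set.\<close>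

definition points :: "nat \<Rightarrow> (bool \<Rightarrow> (nat \<Rightarrow> bool) \<Rightarrow> real) set" where
  "points N = {P. \<forall>a x. x \<notin> inputs N \<longrightarrow> P a x = 0}"

definition behaviors :: "nat \<Rightarrow> (bool \<Rightarrow> (nat \<Rightarrow> bool) \<Rightarrow> real) set" where
  "behaviors N = {P \<in> points N.
      (\<forall>a. \<forall>x\<in>inputs N. 0 \<le> P a x) \<and> (\<forall>x\<in>inputs N. P False x + P True x = 1)}"

definition tuples :: "nat \<Rightarrow> nat \<Rightarrow> nat list set" where
  "tuples N K = {js. length js = K \<and> distinct js \<and> set js \<subseteq> {..<N}}"

text \<open>The polytope C_{N,K}. For each tuple js, D js is a conditional distribution
  P(a | x_{j1} ... x_{jK}), i.e. a function of a and the K-bit string (map x js).\<close>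

definition C_poly :: "nat \<Rightarrow> nat \<Rightarrow> (bool \<Rightarrow> (nat \<Rightarrow> bool) \<Rightarrow> real) set" where
  "C_poly N K = {P \<in> behaviors N. \<exists>(q :: nat list \<Rightarrow> real) (D :: nat list \<Rightarrow> bool \<Rightarrow> bool list \<Rightarrow> real).
      (\<forall>js\<in>tuples N K. 0 \<le> q js) \<and> (\<Sum>js\<in>tuples N K. q js) = 1 \<and>
      (\<forall>js\<in>tuples N K. \<forall>y. length y = K \<longrightarrow>
          (\<forall>a. 0 \<le> D js a y) \<and> D js False y + D js True y = 1) \<and>
      (\<forall>a. \<forall>x\<in>inputs N. P a x = (\<Sum>js\<in>tuples N K. q js * D js a (map x js)))}"

text \<open>Vertices (extreme points) of a set S of such points: P is in S and is not in the
  open segment between two distinct points of S (literal unfolding of extreme_point_of).\<close>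

definition vertex_of :: "(bool \<Rightarrow> (nat \<Rightarrow> bool) \<Rightarrow> real) \<Rightarrow> (bool \<Rightarrow> (nat \<Rightarrow> bool) \<Rightarrow> real) set \<Rightarrow> bool" where
  "vertex_of P S \<longleftrightarrow> P \<in> S \<and>
     (\<forall>Q\<in>S. \<forall>R\<in>S. \<forall>u::real. Q \<noteq> R \<and> 0 < u \<and> u < 1 \<longrightarrow>
        P \<noteq> (\<lambda>a x. (1 - u) * Q a x + u * R a x))"

definition is_junta :: "nat \<Rightarrow> nat \<Rightarrow> ((nat \<Rightarrow> bool) \<Rightarrow> bool) \<Rightarrow> bool" where
  "is_junta N K f \<longleftrightarrow> (\<exists>J. J \<subseteq> {..<N} \<and> card J = N - K \<and>
      (\<forall>j\<in>J. \<forall>x\<in>inputs N. f (x(j := \<not> x j)) = f x))"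

text \<open>Boolean functions on {0,1}^N, normalized to False outside {0,1}^N so that
  distinct elements represent distinct functions.\<close>

definition juntas :: "nat \<Rightarrow> nat \<Rightarrow> ((nat \<Rightarrow> bool) \<Rightarrow> bool) set" where
  "juntas N K = {f. is_junta N K f \<and> (\<forall>x. x \<notin> inputs N \<longrightarrow> f x = False)}"

definition det_behavior :: "nat \<Rightarrow> ((nat \<Rightarrow> bool) \<Rightarrow> bool) \<Rightarrow> bool \<Rightarrow> (nat \<Rightarrow> bool) \<Rightarrow> real" where
  "det_behavior N f = (\<lambda>a x. if x \<in> inputs N then (if a = f x then 1 else 0) else 0)"

end

theory Submission
  imports Defs "HOL-Library.FuncSet"
begin


lemma alt_sum_pow:
  assumes "finite A"
  shows "(\<Sum>W\<in>Pow A. (-1::int) ^ (card A - card W)) = (if A = {} then 1 else 0)"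
  using assms
proof (induction A rule: finite_induct)
  case empty
  then show ?case by simp
next
  case (insert a A)
  have fin: "finite (Pow A)" using insert by simp
  have inj: "inj_on (insert a) (Pow A)" using insert(2) by (auto simp: inj_on_def) (blast+)?
  have disj: "Pow A \<inter> insert a ` Pow A = {}" using insert(2) by auto
  have s1: "(\<Sum>W\<in>Pow A. (-1::int) ^ (card (insert a A) - card W)) = - (\<Sum>W\<in>Pow A. (-1::int) ^ (card A - card W))"
  proof -
    have "(\<Sum>W\<in>Pow A. (-1::int) ^ (card (insert a A) - card W)) = (\<Sum>W\<in>Pow A. - ((-1::int) ^ (card A - card W)))"
    proof (rule sum.cong)
      fix W assume "W \<in> Pow A"
      then have "card W \<le> card A" using insert(1) by (simp add: card_mono)
      then have "card (insert a A) - card W = Suc (card A - card W)" using insert by simp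
      then show "(-1::int) ^ (card (insert a A) - card W) = - ((-1::int) ^ (card A - card W))" by simp
    qed simp
    then show ?thesis by (simp add: sum_negf)
  qed
  have s2: "(\<Sum>W\<in>insert a ` Pow A. (-1::int) ^ (card (insert a A) - card W)) = (\<Sum>W\<in>Pow A. (-1::int) ^ (card A - card W))"
  proof -
    have "(\<Sum>W\<in>insert a ` Pow A. (-1::int) ^ (card (insert a A) - card W)) = (\<Sum>W\<in>Pow A. (-1::int) ^ (card (insert a A) - card (insert a W)))"
      by (rule sum.reindex[OF inj, unfolded comp_def])
    also have "\<dots> = (\<Sum>W\<in>Pow A. (-1::int) ^ (card A - card W))"
    proof (rule sum.cong)
      fix W assume "W \<in> Pow A"
      then have "finite W" "a \<notin> W" using insert finite_subset by auto
      then show "(-1::int) ^ (card (insert a A) - card (insert a W)) = (-1::int) ^ (card A - card W)" using insert by simp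
    qed simp
    finally show ?thesis .
  qed
  have "(\<Sum>W\<in>Pow (insert a A). (-1::int) ^ (card (insert a A) - card W)) =
     (\<Sum>W\<in>Pow A. (-1::int) ^ (card (insert a A) - card W)) + (\<Sum>W\<in>insert a ` Pow A. (-1::int) ^ (card (insert a A) - card W))"
    unfolding Pow_insert by (rule sum.union_disjoint) (use fin disj in auto)
  then show ?case using s1 s2 by simp
qed


lemma alt_sum_sup:
  assumes "finite S" "U \<subseteq> S"
  shows "(\<Sum>T\<in>{T\<in>Pow S. U \<subseteq> T}. (-1::int) ^ (card S - card T)) = (if U = S then 1 else 0)"
proof -
  have inj: "inj_on (\<lambda>W. U \<union> W) (Pow (S - U))" by (auto simp: inj_on_def)
  have img: "(\<lambda>W. U \<union> W) ` Pow (S - U) = {T\<in>Pow S. U \<subseteq> T}"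
  proof
    show "{T\<in>Pow S. U \<subseteq> T} \<subseteq> (\<lambda>W. U \<union> W) ` Pow (S - U)"
    proof
      fix T assume "T \<in> {T\<in>Pow S. U \<subseteq> T}"
      then have "T = U \<union> (T - U)" "T - U \<in> Pow (S - U)" by auto
      then show "T \<in> (\<lambda>W. U \<union> W) ` Pow (S - U)" by blast
    qed
  qed (use assms in auto)
  have "(\<Sum>T\<in>{T\<in>Pow S. U \<subseteq> T}. (-1::int) ^ (card S - card T)) = (\<Sum>W\<in>Pow (S - U). (-1::int) ^ (card S - card (U \<union> W)))"
    unfolding img[symmetric] by (rule sum.reindex[OF inj, unfolded comp_def])
  also have "\<dots> = (\<Sum>W\<in>Pow (S - U). (-1::int) ^ (card (S - U) - card W))"
  proof (rule sum.cong)
    fix W assume W: "W \<in> Pow (S - U)"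
    have fU: "finite U" "finite W" using assms W by (auto intro: finite_subset)
    have "card (U \<union> W) = card U + card W" using W fU by (subst card_Un_disjoint) auto
    moreover have "card (S - U) = card S - card U" using assms by (simp add: card_Diff_subset finite_subset)
    ultimately show "(-1::int) ^ (card S - card (U \<union> W)) = (-1::int) ^ (card (S - U) - card W)" by simp
  qed simp
  also have "\<dots> = (if S - U = {} then 1 else 0)" by (rule alt_sum_pow) (use assms in simp)
  finally show ?thesis using assms by auto
qed

lemma mobius:
  fixes h :: "'a set \<Rightarrow> int"
  assumes "finite S"
  shows "(\<Sum>T\<in>Pow S. (-1)^(card S - card T) * (\<Sum>U\<in>Pow T. h U)) = h S"
proof -
  have fP: "finite (Pow S)" using assms by simp
  have "(\<Sum>T\<in>Pow S. (-1)^(card S - card T) * (\<Sum>U\<in>Pow T. h U))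
      = (\<Sum>T\<in>Pow S. \<Sum>U\<in>{U\<in>Pow S. U \<subseteq> T}. (-1)^(card S - card T) * h U)"
  proof (rule sum.cong)
    fix T assume "T \<in> Pow S"
    then have "Pow T = {U\<in>Pow S. U \<subseteq> T}" by auto
    then show "(-1)^(card S - card T) * (\<Sum>U\<in>Pow T. h U) = (\<Sum>U\<in>{U\<in>Pow S. U \<subseteq> T}. (-1)^(card S - card T) * h U)"
      by (simp add: sum_distrib_left)
  qed simp
  also have "\<dots> = (\<Sum>U\<in>Pow S. \<Sum>T\<in>{T\<in>Pow S. U \<subseteq> T}. (-1)^(card S - card T) * h U)"
    by (rule sum.swap_restrict[OF fP fP])
  also have "\<dots> = (\<Sum>U\<in>Pow S. h U * (if U = S then 1 else 0))"
  proof (rule sum.cong)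
    fix U assume "U \<in> Pow S"
    then show "(\<Sum>T\<in>{T\<in>Pow S. U \<subseteq> T}. (-1)^(card S - card T) * h U) = h U * (if U = S then 1 else 0)"
    proof -
      have "(\<Sum>T\<in>{T\<in>Pow S. U \<subseteq> T}. (-1)^(card S - card T) * h U) = (\<Sum>T\<in>{T\<in>Pow S. U \<subseteq> T}. (-1::int)^(card S - card T)) * h U"
        by (rule sum_distrib_right[symmetric])
      then show ?thesis using alt_sum_sup[OF assms, of U] \<open>U \<in> Pow S\<close> by simp
    qed
  qed simp
  also have "\<dots> = (\<Sum>U\<in>Pow S. if U = S then h S else 0)" by (rule sum.cong) auto
  also have "\<dots> = h S" using sum.delta[OF fP, of S "\<lambda>_. h S"] by simp
  finally show ?thesis .
qed


definition flipinv :: "nat \<Rightarrow> nat set \<Rightarrow> ((nat \<Rightarrow> bool) \<Rightarrow> bool) \<Rightarrow> bool" where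
  "flipinv N J f \<longleftrightarrow> (\<forall>j\<in>J. \<forall>x\<in>inputs N. f (x(j := \<not> x j)) = f x)"
definition dep :: "nat \<Rightarrow> ((nat \<Rightarrow> bool) \<Rightarrow> bool) \<Rightarrow> nat set" where
  "dep N f = {j. j < N \<and> (\<exists>x\<in>inputs N. f (x(j := \<not> x j)) \<noteq> f x)}"
definition nfun :: "nat \<Rightarrow> ((nat \<Rightarrow> bool) \<Rightarrow> bool) set" where
  "nfun N = {f. \<forall>x. x \<notin> inputs N \<longrightarrow> f x = False}"
definition GG :: "nat \<Rightarrow> nat set \<Rightarrow> ((nat \<Rightarrow> bool) \<Rightarrow> bool) set" where
  "GG N S = {f \<in> nfun N. dep N f \<subseteq> S}"
definition HH :: "nat \<Rightarrow> nat set \<Rightarrow> ((nat \<Rightarrow> bool) \<Rightarrow> bool) set" where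
  "HH N S = {f \<in> nfun N. dep N f = S}"
definition XX :: "nat set \<Rightarrow> (nat \<Rightarrow> bool) set" where
  "XX S = {x. \<forall>i. i \<notin> S \<longrightarrow> \<not> x i}"

lemma inputs_flip: "x \<in> inputs N \<Longrightarrow> j < N \<Longrightarrow> x(j := \<not> x j) \<in> inputs N"
  by (auto simp: inputs_def)

lemma inv_agree_aux:
  assumes "finite D" "flipinv N J f" "x' \<in> inputs N"
  shows "\<forall>x. x \<in> inputs N \<and> {i. x i \<noteq> x' i} = D \<and> D \<subseteq> J \<longrightarrow> f x = f x'"
  using assms(1)
proof (induction D rule: finite_induct)
  case empty
  then show ?case by auto
next
  case (insert d D)
  show ?case
  proof (intro allI impI)
    fix x assume x: "x \<in> inputs N \<and> {i. x i \<noteq> x' i} = insert d D \<and> insert d D \<subseteq> J"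
    have dN: "d < N"
    proof (rule ccontr)
      assume "\<not> d < N"
      then have "x d = False" "x' d = False" using x assms(3) by (auto simp: inputs_def)
      then show False using x by auto
    qed
    define x1 where "x1 = x(d := \<not> x d)"
    have x1in: "x1 \<in> inputs N" using inputs_flip[OF _ dN] x x1_def by auto
    have "{i. x1 i \<noteq> x' i} = D"
    proof -
      have "x d \<noteq> x' d" using x by auto
      then show ?thesis using x insert(2) unfolding x1_def by (auto split: if_splits)
    qed
    then have "f x1 = f x'" using insert(3) x1in x by auto
    moreover have "f x1 = f x" using assms(2) x x1_def unfolding flipinv_def by auto
    ultimately show "f x = f x'" by simp
  qed
qed

lemma inv_agree:
  assumes "flipinv N J f" "x \<in> inputs N" "x' \<in> inputs N" "\<forall>i. i \<notin> J \<longrightarrow> x i = x' i"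
  shows "f x = f x'"
proof -
  have "{i. x i \<noteq> x' i} \<subseteq> {..<N}" using assms(2,3) by (auto simp: inputs_def) (metis not_less)+
  then have "finite {i. x i \<noteq> x' i}" by (rule finite_subset) simp
  from inv_agree_aux[OF this assms(1,3)] show ?thesis using assms(2,4) by auto
qed

lemma flipinv_dep: "flipinv N ({..<N} - dep N f) f"
  unfolding flipinv_def dep_def by auto

lemma flipinv_mono: "flipinv N J f \<Longrightarrow> J' \<subseteq> J \<Longrightarrow> flipinv N J' f"
  unfolding flipinv_def by auto

lemma dep_sub: "dep N f \<subseteq> {..<N}" unfolding dep_def by auto

lemma flipinv_iff: "J \<subseteq> {..<N} \<Longrightarrow> flipinv N J f \<longleftrightarrow> J \<inter> dep N f = {}"
  unfolding flipinv_def dep_def by auto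

lemma is_junta_iff:
  assumes "K \<le> N"
  shows "is_junta N K f \<longleftrightarrow> card (dep N f) \<le> K"
proof
  assume "is_junta N K f"
  then obtain J where J: "J \<subseteq> {..<N}" "card J = N - K" "flipinv N J f"
    unfolding is_junta_def flipinv_def by blast
  then have "dep N f \<subseteq> {..<N} - J" using flipinv_iff[OF J(1)] dep_sub by blast
  then have "card (dep N f) \<le> card ({..<N} - J)" by (intro card_mono) auto
  also have "\<dots> = N - (N - K)" using J by (simp add: card_Diff_subset finite_subset)
  finally show "card (dep N f) \<le> K" by simp
next
  assume c: "card (dep N f) \<le> K"
  have "card ({..<N} - dep N f) = N - card (dep N f)" using dep_sub[of N f]
    by (subst card_Diff_subset) (auto intro: finite_subset)
  then have "N - K \<le> card ({..<N} - dep N f)" using c by simp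
  then obtain J where J: "J \<subseteq> {..<N} - dep N f" "card J = N - K"
    using obtain_subset_with_card_n by metis
  then have "flipinv N J f" using flipinv_mono[OF flipinv_dep] by blast
  then show "is_junta N K f" unfolding is_junta_def flipinv_def using J by blast
qed

lemma card_XX:
  assumes "finite S"
  shows "finite (XX S)" "card (XX S) = 2 ^ card S"
proof -
  have eq: "XX S = (\<lambda>A i. i \<in> A) ` Pow S" unfolding XX_def
  proof (rule set_eqI, rule iffI)
    fix x assume "x \<in> {x. \<forall>i. i \<notin> S \<longrightarrow> \<not> x i}"
    then have "x = (\<lambda>i. i \<in> {i. x i})" "{i. x i} \<in> Pow S" by auto
    then show "x \<in> (\<lambda>A i. i \<in> A) ` Pow S" by blast
  qed auto
  have inj: "inj_on (\<lambda>A i. i \<in> A) (Pow S)" unfolding inj_on_def by (metis Collect_mem_eq)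
  show "finite (XX S)" using eq assms by simp
  show "card (XX S) = 2 ^ card S" using eq card_image[OF inj] assms by (simp add: card_Pow)
qed


lemma XX_inputs: "S \<subseteq> {..<N} \<Longrightarrow> XX S \<subseteq> inputs N"
  unfolding XX_def inputs_def by auto

lemma card_GG:
  assumes S: "S \<subseteq> {..<N}"
  shows "finite (GG N S)" "card (GG N S) = 2 ^ (2 ^ card S)"
proof -
  have fS: "finite S" using S finite_subset by blast
  define ext where "ext = (\<lambda>g x. if x \<in> inputs N then g (\<lambda>i. i \<in> S \<and> x i) else False)"
  have pr: "(\<lambda>i. i \<in> S \<and> x i) \<in> XX S" for x unfolding XX_def by auto
  have bij: "bij_betw (\<lambda>f. restrict f (XX S)) (GG N S) (XX S \<rightarrow>\<^sub>E (UNIV::bool set))"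
  proof (rule bij_betwI[where g = ext])
    show "(\<lambda>f. restrict f (XX S)) \<in> GG N S \<rightarrow> XX S \<rightarrow>\<^sub>E UNIV" by auto
    show "ext \<in> (XX S \<rightarrow>\<^sub>E UNIV) \<rightarrow> GG N S"
    proof
      fix g :: "(nat \<Rightarrow> bool) \<Rightarrow> bool"
      have "ext g \<in> nfun N" unfolding ext_def nfun_def by auto
      moreover have "dep N (ext g) \<subseteq> S"
      proof
        fix j assume j: "j \<in> dep N (ext g)"
        show "j \<in> S"
        proof (rule ccontr)
          assume "j \<notin> S"
          then have "(\<lambda>i. i \<in> S \<and> (x(j := \<not> x j)) i) = (\<lambda>i. i \<in> S \<and> x i)" for x by auto
          moreover have "x(j := \<not> x j) \<in> inputs N" if "x \<in> inputs N" for x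
            using j that inputs_flip unfolding dep_def by auto
          ultimately show False using j unfolding dep_def ext_def by auto
        qed
      qed
      ultimately show "ext g \<in> GG N S" unfolding GG_def by auto
    qed
    show "ext (restrict f (XX S)) = f" if f: "f \<in> GG N S" for f
    proof
      fix x
      show "ext (restrict f (XX S)) x = f x"
      proof (cases "x \<in> inputs N")
        case True
        have fi: "flipinv N ({..<N} - S) f"
          using flipinv_mono[OF flipinv_dep[of N f], of "{..<N} - S"] f unfolding GG_def by auto
        have "(\<lambda>i. i \<in> S \<and> x i) \<in> inputs N" using pr XX_inputs[OF S] by blast
        then have "f (\<lambda>i. i \<in> S \<and> x i) = f x"
          by (rule inv_agree[OF fi _ True]) (use True S in \<open>auto simp: inputs_def\<close>)
        then show ?thesis using True pr unfolding ext_def by simp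
      next
        case False
        then show ?thesis using f unfolding ext_def GG_def nfun_def by simp
      qed
    qed
    show "restrict (ext g) (XX S) = g" if g: "g \<in> XX S \<rightarrow>\<^sub>E UNIV" for g
    proof
      fix x
      show "restrict (ext g) (XX S) x = g x"
      proof (cases "x \<in> XX S")
        case True
        then have "x \<in> inputs N" using XX_inputs[OF S] by blast
        moreover have "(\<lambda>i. i \<in> S \<and> x i) = x" using True unfolding XX_def by auto
        ultimately show ?thesis using True unfolding ext_def by simp
      next
        case False
        then show ?thesis using g by (simp add: PiE_def extensional_def)
      qed
    qed
  qed
  have fX: "finite (XX S)" "card (XX S) = 2 ^ card S" using card_XX[OF fS] by auto
  have fin: "finite (XX S \<rightarrow>\<^sub>E (UNIV::bool set))" using fX by (simp add: finite_PiE)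
  have cP: "card (XX S \<rightarrow>\<^sub>E (UNIV::bool set)) = 2 ^ (2 ^ card S)"
    using fX by (simp add: card_PiE)
  show "finite (GG N S)" using bij_betw_finite[OF bij] fin by simp
  show "card (GG N S) = 2 ^ (2 ^ card S)" using bij_betw_same_card[OF bij] cP by simp
qed


definition ee :: "nat \<Rightarrow> int" where
  "ee k = (\<Sum>r=0..k. (-1) ^ (k - r) * int (k choose r) * 2 ^ (2 ^ r))"

lemma nfun_GG: "nfun N = GG N {..<N}"
  unfolding GG_def using dep_sub by blast

lemma HH_sub: "HH N T \<subseteq> nfun N" unfolding HH_def by auto

lemma finite_HH: "finite (HH N T)"
  using card_GG(1)[of "{..<N}" N] nfun_GG HH_sub by (metis finite_subset order_refl)

lemma card_GG_sum:
  assumes S: "S \<subseteq> {..<N}"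
  shows "card (GG N S) = (\<Sum>T\<in>Pow S. card (HH N T))"
proof -
  have fS: "finite S" using S finite_subset by blast
  have "GG N S = (\<Union>T\<in>Pow S. HH N T)" unfolding GG_def HH_def by auto
  moreover have "card (\<Union>T\<in>Pow S. HH N T) = (\<Sum>T\<in>Pow S. card (HH N T))"
    by (rule card_UN_disjoint) (use fS finite_HH in \<open>auto simp: HH_def\<close>)
  ultimately show ?thesis by simp
qed

lemma sum_Pow_card:
  fixes g :: "nat \<Rightarrow> int"
  assumes "finite S"
  shows "(\<Sum>T\<in>Pow S. g (card T)) = (\<Sum>r=0..card S. int (card S choose r) * g r)"
proof -
  have "(\<Sum>T\<in>Pow S. g (card T)) = (\<Sum>r=0..card S. \<Sum>T\<in>{T. T \<in> Pow S \<and> card T = r}. g (card T))"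
    by (rule sum.group[symmetric]) (use assms in \<open>auto simp: card_mono\<close>)
  also have "\<dots> = (\<Sum>r=0..card S. int (card S choose r) * g r)"
  proof (rule sum.cong)
    fix r
    have "(\<Sum>T\<in>{T. T \<in> Pow S \<and> card T = r}. g (card T)) = (\<Sum>T\<in>{T. T \<subseteq> S \<and> card T = r}. g r)"
      by (rule sum.cong) auto
    also have "\<dots> = int (card S choose r) * g r" using n_subsets[OF assms, of r] by simp
    finally show "(\<Sum>T\<in>{T. T \<in> Pow S \<and> card T = r}. g (card T)) = int (card S choose r) * g r" .
  qed simp
  finally show ?thesis .
qed

lemma card_HH:
  assumes S: "S \<subseteq> {..<N}"
  shows "int (card (HH N S)) = ee (card S)"
proof -
  have fS: "finite S" using S finite_subset by blast
  have "int (card (HH N S)) = (\<Sum>T\<in>Pow S. (-1)^(card S - card T) * (\<Sum>U\<in>Pow T. int (card (HH N U))))"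
    by (rule mobius[OF fS, symmetric])
  also have "\<dots> = (\<Sum>T\<in>Pow S. (-1)^(card S - card T) * 2 ^ (2 ^ card T))"
  proof (rule sum.cong)
    fix T assume "T \<in> Pow S"
    then have T: "T \<subseteq> {..<N}" using S by auto
    have "(\<Sum>U\<in>Pow T. int (card (HH N U))) = int (card (GG N T))"
      using card_GG_sum[OF T] by simp
    also have "\<dots> = 2 ^ (2 ^ card T)" using card_GG(2)[OF T] by simp
    finally show "(-1)^(card S - card T) * (\<Sum>U\<in>Pow T. int (card (HH N U))) = (-1)^(card S - card T) * 2 ^ (2 ^ card T)" by simp
  qed simp
  also have "\<dots> = (\<Sum>r=0..card S. int (card S choose r) * ((-1)^(card S - r) * 2 ^ (2 ^ r)))"
    by (rule sum_Pow_card[OF fS, of "\<lambda>r. (-1)^(card S - r) * 2 ^ (2 ^ r)"])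
  also have "\<dots> = ee (card S)" unfolding ee_def by (rule sum.cong) auto
  finally show ?thesis .
qed

lemma juntas_eq: "K \<le> N \<Longrightarrow> juntas N K = (\<Union>S\<in>{S. S \<subseteq> {..<N} \<and> card S \<le> K}. HH N S)"
  unfolding juntas_def HH_def nfun_def using is_junta_iff[of K N] dep_sub[of N] by auto

lemma card_juntas:
  assumes "K \<le> N"
  shows "int (card (juntas N K)) = (\<Sum>k=0..K. int (N choose k) * ee k)"
proof -
  let ?I = "{S. S \<subseteq> {..<N} \<and> card S \<le> K}"
  have fI: "finite ?I" by (rule finite_subset[of _ "Pow {..<N}"]) auto
  have "card (juntas N K) = (\<Sum>S\<in>?I. card (HH N S))"
    unfolding juntas_eq[OF assms]
    by (rule card_UN_disjoint) (use fI finite_HH in \<open>auto simp: HH_def\<close>)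
  then have "int (card (juntas N K)) = (\<Sum>S\<in>?I. int (card (HH N S)))" by simp
  also have "\<dots> = (\<Sum>S\<in>?I. ee (card S))" by (rule sum.cong) (auto simp: card_HH)
  also have "\<dots> = (\<Sum>k=0..K. \<Sum>S\<in>{S. S \<in> ?I \<and> card S = k}. ee (card S))"
    by (rule sum.group[symmetric]) (use fI in auto)
  also have "\<dots> = (\<Sum>k=0..K. int (N choose k) * ee k)"
  proof (rule sum.cong)
    fix k assume "k \<in> {0..K}"
    then have "{S. S \<in> ?I \<and> card S = k} = {S. S \<subseteq> {..<N} \<and> card S = k}" by auto
    then have "(\<Sum>S\<in>{S. S \<in> ?I \<and> card S = k}. ee (card S)) = (\<Sum>S\<in>{S. S \<subseteq> {..<N} \<and> card S = k}. ee k)"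
      by simp
    also have "\<dots> = int (N choose k) * ee k" using n_subsets[of "{..<N}" k] by simp
    finally show "(\<Sum>S\<in>{S. S \<in> ?I \<and> card S = k}. ee (card S)) = int (N choose k) * ee k" .
  qed simp
  finally show ?thesis .
qed




definition rep :: "nat \<Rightarrow> nat \<Rightarrow> (nat list \<Rightarrow> real) \<Rightarrow> (nat list \<Rightarrow> bool \<Rightarrow> bool list \<Rightarrow> real) \<Rightarrow> bool \<Rightarrow> (nat \<Rightarrow> bool) \<Rightarrow> real" where
  "rep N K q D = (\<lambda>a x. if x \<in> inputs N then (\<Sum>js\<in>tuples N K. q js * D js a (map x js)) else 0)"

definition validD :: "nat \<Rightarrow> nat \<Rightarrow> (nat list \<Rightarrow> bool \<Rightarrow> bool list \<Rightarrow> real) \<Rightarrow> bool" where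
  "validD N K D \<longleftrightarrow> (\<forall>js\<in>tuples N K. \<forall>y. length y = K \<longrightarrow>
          (\<forall>a. 0 \<le> D js a y) \<and> D js False y + D js True y = 1)"

definition validq :: "nat \<Rightarrow> nat \<Rightarrow> (nat list \<Rightarrow> real) \<Rightarrow> bool" where
  "validq N K q \<longleftrightarrow> (\<forall>js\<in>tuples N K. 0 \<le> q js) \<and> (\<Sum>js\<in>tuples N K. q js) = 1"

lemma finite_tuples: "finite (tuples N K)"
proof (rule finite_subset)
  show "tuples N K \<subseteq> {xs. set xs \<subseteq> {..<N} \<and> length xs = K}" unfolding tuples_def by auto
  show "finite {xs. set xs \<subseteq> {..<N} \<and> length xs = K}" by (rule finite_lists_length_eq) simp
qed

lemma tuples_len: "js \<in> tuples N K \<Longrightarrow> length (map x js) = K"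
  unfolding tuples_def by simp

lemma C_poly_iff: "P \<in> C_poly N K \<longleftrightarrow> P \<in> behaviors N \<and> (\<exists>q D. validq N K q \<and> validD N K D \<and>
   (\<forall>a. \<forall>x\<in>inputs N. P a x = (\<Sum>js\<in>tuples N K. q js * D js a (map x js))))"
  unfolding C_poly_def validq_def validD_def by blast

lemma rep_in_C:
  assumes q: "validq N K q" and D: "validD N K D"
  shows "rep N K q D \<in> C_poly N K"
proof -
  have pts: "rep N K q D \<in> points N" unfolding points_def rep_def by auto
  have nn: "0 \<le> rep N K q D a x" for a x
    unfolding rep_def using q D tuples_len
    by (auto simp: validq_def validD_def intro!: sum_nonneg mult_nonneg_nonneg)
  have one: "rep N K q D False x + rep N K q D True x = 1" if "x \<in> inputs N" for x
  proof -
    have "rep N K q D False x + rep N K q D True x = (\<Sum>js\<in>tuples N K. q js * (D js False (map x js) + D js True (map x js)))"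
      using that unfolding rep_def by (simp add: sum.distrib[symmetric] distrib_left)
    also have "\<dots> = (\<Sum>js\<in>tuples N K. q js)"
      by (rule sum.cong) (use D tuples_len in \<open>auto simp: validD_def\<close>)
    finally show ?thesis using q by (simp add: validq_def)
  qed
  have "rep N K q D \<in> behaviors N" unfolding behaviors_def using pts nn one by auto
  moreover have "\<forall>a. \<forall>x\<in>inputs N. rep N K q D a x = (\<Sum>js\<in>tuples N K. q js * D js a (map x js))"
    unfolding rep_def by simp
  ultimately show ?thesis unfolding C_poly_iff using q D by blast
qed

lemma points_ext:
  assumes "P \<in> points N" "Q \<in> points N" "\<forall>a. \<forall>x\<in>inputs N. P a x = Q a x"
  shows "P = Q"
proof (intro ext)
  fix a x show "P a x = Q a x" using assms unfolding points_def by (cases "x \<in> inputs N") auto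
qed

lemma C_sub: "C_poly N K \<subseteq> behaviors N" "behaviors N \<subseteq> points N"
  unfolding C_poly_def behaviors_def by auto


lemma midpoint_not_vertex:
  assumes P: "P \<in> points N" and P1: "P1 \<in> C_poly N K" and P2: "P2 \<in> C_poly N K"
    and mid: "\<forall>a. \<forall>x\<in>inputs N. P a x = (P1 a x + P2 a x) / 2" and ne: "P1 \<noteq> P2"
  shows "\<not> vertex_of P (C_poly N K)"
proof
  assume v: "vertex_of P (C_poly N K)"
  have p1: "P1 \<in> points N" and p2: "P2 \<in> points N" using P1 P2 C_sub by blast+
  have "(\<lambda>a x. (1 - 1/2) * P1 a x + (1/2) * P2 a x) \<in> points N" using p1 p2 unfolding points_def by auto
  then have "P = (\<lambda>a x. (1 - 1/2) * P1 a x + (1/2) * P2 a x)"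
  proof (rule points_ext[OF P], intro allI ballI)
    fix a x assume "x \<in> inputs N"
    then have "P a x = (P1 a x + P2 a x) / 2" using mid by blast
    then show "P a x = (1 - 1/2) * P1 a x + (1/2) * P2 a x" by simp
  qed
  moreover have "\<forall>Q\<in>C_poly N K. \<forall>R\<in>C_poly N K. \<forall>u::real. Q \<noteq> R \<and> 0 < u \<and> u < 1 \<longrightarrow>
        P \<noteq> (\<lambda>a x. (1 - u) * Q a x + u * R a x)" using v unfolding vertex_of_def by blast
  then have "P \<noteq> (\<lambda>a x. (1 - 1/2) * P1 a x + (1/2) * P2 a x)"
    using P1 P2 ne by (elim ballE allE[of _ "1/2::real"]) auto
  ultimately show False by blast
qed


lemma beh_bounds:
  assumes "Q \<in> behaviors N" "x \<in> inputs N"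
  shows "0 \<le> Q a x" "Q a x \<le> 1"
proof -
  have "0 \<le> Q False x" "0 \<le> Q True x" "Q False x + Q True x = 1" using assms unfolding behaviors_def by auto
  then show "0 \<le> Q a x" "Q a x \<le> 1" by (cases a; simp)+
qed

lemma det_extreme:
  assumes P01: "\<forall>a. \<forall>x\<in>inputs N. P a x = 0 \<or> P a x = 1"
    and Q: "Q \<in> behaviors N" and R: "R \<in> behaviors N" and u: "0 < u" "u < 1"
    and eq: "P = (\<lambda>a x. (1 - u) * Q a x + u * R a x)"
  shows "Q = R"
proof (rule points_ext)
  show "Q \<in> points N" "R \<in> points N" using Q R C_sub by blast+
  show "\<forall>a. \<forall>x\<in>inputs N. Q a x = R a x"
  proof (intro allI ballI)
    fix a x assume x: "x \<in> inputs N"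
    have b: "0 \<le> Q a x" "Q a x \<le> 1" "0 \<le> R a x" "R a x \<le> 1" using beh_bounds[OF Q x] beh_bounds[OF R x] by auto
    have e: "P a x = (1 - u) * Q a x + u * R a x" using eq by simp
    have m1: "0 \<le> (1 - u) * Q a x" "0 \<le> u * R a x" using b u by auto
    have m2: "0 \<le> (1 - u) * (1 - Q a x)" "0 \<le> u * (1 - R a x)" using b u by auto
    show "Q a x = R a x"
    proof (cases "P a x = 0")
      case True
      then have "(1 - u) * Q a x = 0" "u * R a x = 0" using e m1 by linarith+
      then show ?thesis using u by simp
    next
      case False
      then have "P a x = 1" using P01 x by blast
      then have "(1 - u) * (1 - Q a x) + u * (1 - R a x) = 0" using e by (simp add: algebra_simps)
      then have "(1 - u) * (1 - Q a x) = 0" "u * (1 - R a x) = 0" using m2 by linarith+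
      then show ?thesis using u by simp
    qed
  qed
qed




lemma junta_in_C:
  assumes KN: "K \<le> N" and f: "is_junta N K f"
  shows "det_behavior N f \<in> C_poly N K"
proof -
  obtain J where J: "J \<subseteq> {..<N}" "card J = N - K" and fi: "flipinv N J f"
    using f unfolding is_junta_def flipinv_def by blast
  define S where "S = {..<N} - J"
  have fS: "finite S" unfolding S_def by simp
  have cS: "card S = K" unfolding S_def using J KN by (simp add: card_Diff_subset finite_subset)
  define js where "js = sorted_list_of_set S"
  have js: "js \<in> tuples N K" unfolding tuples_def js_def using fS cS by (auto simp: S_def)
  have sjs: "set js = S" unfolding js_def using fS by simp
  define recon where "recon = (\<lambda>y i. \<exists>k<length js. js!k = i \<and> y!k)"
  define q where "q = (\<lambda>js'::nat list. if js' = js then 1 else (0::real))"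
  define D where "D = (\<lambda>(js'::nat list) a y. if a = f (recon y) then 1 else (0::real))"
  have vq: "validq N K q" unfolding validq_def q_def using js finite_tuples by simp
  have vD: "validD N K D" unfolding validD_def D_def by auto
  have rec: "recon (map x js) = (\<lambda>i. i \<in> S \<and> x i)" for x
  proof
    fix i show "recon (map x js) i = (i \<in> S \<and> x i)"
      unfolding recon_def using sjs by (auto simp: in_set_conv_nth) (metis nth_map)
  qed
  have "det_behavior N f = rep N K q D"
  proof (intro ext)
    fix a x
    show "det_behavior N f a x = rep N K q D a x"
    proof (cases "x \<in> inputs N")
      case True
      have "(\<Sum>js'\<in>tuples N K. q js' * D js' a (map x js')) = D js a (map x js)"
      proof -
        have "(\<Sum>js'\<in>tuples N K. q js' * D js' a (map x js')) = (\<Sum>js'\<in>tuples N K. if js' = js then D js' a (map x js') else 0)"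
          unfolding q_def by (rule sum.cong) auto
        then show ?thesis using js finite_tuples by simp
      qed
      moreover have "f (\<lambda>i. i \<in> S \<and> x i) = f x"
      proof (rule inv_agree[OF fi _ True])
        show "(\<lambda>i. i \<in> S \<and> x i) \<in> inputs N" unfolding inputs_def S_def by auto
        show "\<forall>i. i \<notin> J \<longrightarrow> (i \<in> S \<and> x i) = x i" using True unfolding S_def inputs_def by (auto simp: not_le[symmetric])
      qed
      ultimately show ?thesis using True unfolding det_behavior_def rep_def D_def rec by simp
    next
      case False
      then show ?thesis unfolding det_behavior_def rep_def by simp
    qed
  qed
  then show ?thesis using rep_in_C[OF vq vD] by simp
qed


lemma pert1:
  assumes vD: "validD N K D" and js0: "js0 \<in> tuples N K" and y0: "length y0 = K"
    and c1: "\<bar>c\<bar> \<le> D js0 True y0" and c2: "\<bar>c\<bar> \<le> D js0 False y0"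
  defines "Dc \<equiv> (\<lambda>js a y. D js a y + (if js = js0 \<and> y = y0 then (if a then c else -c) else 0))"
  shows "validD N K Dc"
    "x \<in> inputs N \<Longrightarrow> rep N K q Dc a x = rep N K q D a x + q js0 * (if map x js0 = y0 then (if a then c else -c) else 0)"
proof -
  show "validD N K Dc"
    unfolding validD_def
  proof (intro ballI allI impI conjI)
    fix js and y :: "bool list" and a assume js: "js \<in> tuples N K" and y: "length y = K"
    show "0 \<le> Dc js a y"
      using vD js y c1 c2 unfolding Dc_def validD_def by (cases a) auto
    show "Dc js False y + Dc js True y = 1"
      using vD js y unfolding Dc_def validD_def by auto
  qed
  assume x: "x \<in> inputs N"
  have "rep N K q Dc a x = (\<Sum>js\<in>tuples N K. q js * D js a (map x js) + (if js = js0 then q js0 * (if map x js0 = y0 then (if a then c else -c) else 0) else 0))"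
    unfolding rep_def Dc_def using x by (auto intro!: sum.cong simp: distrib_left)
  also have "\<dots> = rep N K q D a x + q js0 * (if map x js0 = y0 then (if a then c else -c) else 0)"
    unfolding rep_def using x js0 finite_tuples by (simp add: sum.distrib)
  finally show "rep N K q Dc a x = rep N K q D a x + q js0 * (if map x js0 = y0 then (if a then c else -c) else 0)" .
qed

lemma pert2:
  assumes vq: "validq N K q" and js1: "js1 \<in> tuples N K" and js2: "js2 \<in> tuples N K" and ne: "js1 \<noteq> js2"
    and c1: "\<bar>c\<bar> \<le> q js1" and c2: "\<bar>c\<bar> \<le> q js2"
  defines "qc \<equiv> (\<lambda>js. q js + c * ((if js = js1 then 1 else 0) - (if js = js2 then 1 else 0)))"
  shows "validq N K qc"
    "x \<in> inputs N \<Longrightarrow> rep N K qc D a x = rep N K q D a x + c * (D js1 a (map x js1) - D js2 a (map x js2))"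
proof -
  have s: "(\<Sum>js\<in>tuples N K. g js + c * ((if js = js1 then 1 else 0) - (if js = js2 then 1 else 0)) * h js)
      = (\<Sum>js\<in>tuples N K. g js) + c * (h js1 - h js2)" for g h :: "nat list \<Rightarrow> real"
  proof -
    have "(\<Sum>js\<in>tuples N K. g js + c * ((if js = js1 then 1 else 0) - (if js = js2 then 1 else 0)) * h js)
       = (\<Sum>js\<in>tuples N K. g js) + ((\<Sum>js\<in>tuples N K. if js = js1 then c * h js1 else 0) - (\<Sum>js\<in>tuples N K. if js = js2 then c * h js2 else 0))"
    proof -
      have "(\<Sum>js\<in>tuples N K. g js + c * ((if js = js1 then 1 else 0) - (if js = js2 then 1 else 0)) * h js)
        = (\<Sum>js\<in>tuples N K. g js + ((if js = js1 then c * h js1 else 0) - (if js = js2 then c * h js2 else 0)))"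
        by (rule sum.cong) auto
      then show ?thesis by (simp add: sum.distrib sum_subtractf)
    qed
    also have "\<dots> = (\<Sum>js\<in>tuples N K. g js) + c * (h js1 - h js2)"
      using js1 js2 finite_tuples by (simp add: algebra_simps)
    finally show ?thesis .
  qed
  show "validq N K qc" unfolding validq_def
  proof (intro conjI ballI)
    fix js assume "js \<in> tuples N K"
    then show "0 \<le> qc js" using vq c1 c2 ne unfolding qc_def validq_def by auto
  next
    show "sum qc (tuples N K) = 1" using s[of q "\<lambda>_. 1"] vq unfolding qc_def validq_def by simp
  qed
  assume x: "x \<in> inputs N"
  have "rep N K qc D a x = (\<Sum>js\<in>tuples N K. q js * D js a (map x js) + c * ((if js = js1 then 1 else 0) - (if js = js2 then 1 else 0)) * D js a (map x js))"
    unfolding rep_def qc_def using x by (auto intro!: sum.cong simp: algebra_simps)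
  also have "\<dots> = rep N K q D a x + c * (D js1 a (map x js1) - D js2 a (map x js2))"
    using s[of "\<lambda>js. q js * D js a (map x js)" "\<lambda>js. D js a (map x js)"] x unfolding rep_def by simp
  finally show "rep N K qc D a x = rep N K q D a x + c * (D js1 a (map x js1) - D js2 a (map x js2))" .
qed


lemma vertex_det:
  assumes v: "vertex_of P (C_poly N K)" and x0: "x0 \<in> inputs N"
  shows "P True x0 = 0 \<or> P True x0 = 1"
proof (rule ccontr)
  assume nd: "\<not> (P True x0 = 0 \<or> P True x0 = 1)"
  have PC: "P \<in> C_poly N K" using v unfolding vertex_of_def by blast
  then obtain q D where vq: "validq N K q" and vD: "validD N K D"
    and rp: "\<forall>a. \<forall>x\<in>inputs N. P a x = (\<Sum>js\<in>tuples N K. q js * D js a (map x js))"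
    unfolding C_poly_iff by blast
  have Pb: "P \<in> behaviors N" using PC C_sub by blast
  have Pp: "P \<in> points N" using Pb C_sub by blast
  have Prep: "P a x = rep N K q D a x" if "x \<in> inputs N" for a x using rp that unfolding rep_def by simp
  have b: "0 < P True x0" "P True x0 < 1" using beh_bounds[OF Pb x0, of True] nd by auto
  define t where "t js = D js True (map x0 js)" for js
  have tb: "0 \<le> t js" "t js \<le> 1" if "js \<in> tuples N K" for js
  proof -
    have "0 \<le> D js True (map x0 js)" "0 \<le> D js False (map x0 js)" "D js False (map x0 js) + D js True (map x0 js) = 1"
      using vD that tuples_len unfolding validD_def by blast+
    then show "0 \<le> t js" "t js \<le> 1" unfolding t_def by auto
  qed
  have qnn: "0 \<le> q js" if "js \<in> tuples N K" for js using vq that unfolding validq_def by blast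
  have q1: "(\<Sum>js\<in>tuples N K. q js) = 1" using vq unfolding validq_def by blast
  have Psum: "P True x0 = (\<Sum>js\<in>tuples N K. q js * t js)" using rp x0 unfolding t_def by simp
  show False
  proof (cases "\<exists>js0\<in>tuples N K. 0 < q js0 \<and> 0 < t js0 \<and> t js0 < 1")
    case True
    then obtain js0 where js0: "js0 \<in> tuples N K" "0 < q js0" "0 < t js0" "t js0 < 1" by blast
    define y0 where "y0 = map x0 js0"
    have y0l: "length y0 = K" unfolding y0_def using tuples_len[OF js0(1)] .
    have "D js0 False y0 + D js0 True y0 = 1" using vD js0(1) y0l unfolding validD_def by blast
    then have DF: "D js0 False y0 = 1 - t js0" unfolding t_def y0_def by simp
    define e where "e = min (D js0 True y0) (D js0 False y0)"
    have e0: "0 < e" unfolding e_def using DF js0 by (auto simp: t_def y0_def)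
    have ec: "\<bar>e\<bar> \<le> D js0 True y0" "\<bar>e\<bar> \<le> D js0 False y0" "\<bar>-e\<bar> \<le> D js0 True y0" "\<bar>-e\<bar> \<le> D js0 False y0"
      using e0 unfolding e_def by auto
    note A = pert1[OF vD js0(1) y0l ec(1,2)]
    note B = pert1[OF vD js0(1) y0l ec(3,4)]
    let ?P1 = "rep N K q (\<lambda>js a y. D js a y + (if js = js0 \<and> y = y0 then (if a then e else -e) else 0))"
    let ?P2 = "rep N K q (\<lambda>js a y. D js a y + (if js = js0 \<and> y = y0 then (if a then -e else - (-e)) else 0))"
    have C1: "?P1 \<in> C_poly N K" by (rule rep_in_C[OF vq A(1)])
    have C2: "?P2 \<in> C_poly N K" by (rule rep_in_C[OF vq B(1)])
    have mid: "\<forall>a. \<forall>x\<in>inputs N. P a x = (?P1 a x + ?P2 a x) / 2"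
      using A(2) B(2) Prep by auto
    have "?P1 True x0 - ?P2 True x0 = 2 * q js0 * e"
      using A(2)[OF x0, where a=True] B(2)[OF x0, where a=True] y0_def by simp
    then have "?P1 \<noteq> ?P2" using js0(2) e0 by force
    then show False using midpoint_not_vertex[OF Pp C1 C2 mid] v by blast
  next
    case False
    then have t01: "t js = 0 \<or> t js = 1" if "js \<in> tuples N K" "0 < q js" for js
      using that tb[OF that(1)] by force
    obtain js1 where js1: "js1 \<in> tuples N K" "0 < q js1" "t js1 = 1"
    proof (rule ccontr)
      assume "\<not> thesis"
      then have "\<forall>js\<in>tuples N K. 0 < q js \<longrightarrow> t js \<noteq> 1" using that by blast
      then have "\<forall>js\<in>tuples N K. q js * t js = 0" using t01 qnn by (metis less_eq_real_def mult_eq_0_iff)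
      then have "(\<Sum>js\<in>tuples N K. q js * t js) = 0" by (rule sum.neutral)
      then have "P True x0 = 0" using Psum by simp
      then show False using b by simp
    qed
    obtain js2 where js2: "js2 \<in> tuples N K" "0 < q js2" "t js2 = 0"
    proof (rule ccontr)
      assume "\<not> thesis"
      then have "\<forall>js\<in>tuples N K. 0 < q js \<longrightarrow> t js \<noteq> 0" using that by blast
      then have "\<forall>js\<in>tuples N K. q js * t js = q js" using t01 qnn by (metis less_eq_real_def mult_cancel_left1 mult_eq_0_iff)
      then have "(\<Sum>js\<in>tuples N K. q js * t js) = (\<Sum>js\<in>tuples N K. q js)" by (intro sum.cong) auto
      then have "P True x0 = 1" using Psum q1 by simp
      then show False using b by simp
    qed
    have ne: "js1 \<noteq> js2" using js1 js2 by auto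
    define e where "e = min (q js1) (q js2)"
    have e0: "0 < e" unfolding e_def using js1 js2 by auto
    have ec: "\<bar>e\<bar> \<le> q js1" "\<bar>e\<bar> \<le> q js2" "\<bar>-e\<bar> \<le> q js1" "\<bar>-e\<bar> \<le> q js2"
      using e0 unfolding e_def by auto
    note A = pert2[OF vq js1(1) js2(1) ne ec(1,2)]
    note B = pert2[OF vq js1(1) js2(1) ne ec(3,4)]
    let ?P1 = "rep N K (\<lambda>js. q js + e * ((if js = js1 then 1 else 0) - (if js = js2 then 1 else 0))) D"
    let ?P2 = "rep N K (\<lambda>js. q js + -e * ((if js = js1 then 1 else 0) - (if js = js2 then 1 else 0))) D"
    have C1: "?P1 \<in> C_poly N K" by (rule rep_in_C[OF A(1) vD])
    have C2: "?P2 \<in> C_poly N K" by (rule rep_in_C[OF B(1) vD])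
    have mid: "\<forall>a. \<forall>x\<in>inputs N. P a x = (?P1 a x + ?P2 a x) / 2"
      using A(2) B(2) Prep by auto
    have "?P1 True x0 - ?P2 True x0 = 2 * e"
      using A(2)[OF x0, where a=True] B(2)[OF x0, where a=True] js1(3) js2(3) unfolding t_def by simp
    then have "?P1 \<noteq> ?P2" using e0 by force
    then show False using midpoint_not_vertex[OF Pp C1 C2 mid] v by blast
  qed
qed


lemma vertex_junta:
  assumes KN: "K \<le> N" and PC: "P \<in> C_poly N K" and d: "\<forall>x\<in>inputs N. P True x = 0 \<or> P True x = 1"
  shows "is_junta N K (\<lambda>x. P True x = 1)"
proof -
  obtain q D where vq: "validq N K q" and vD: "validD N K D"
    and rp: "\<forall>a. \<forall>x\<in>inputs N. P a x = (\<Sum>js\<in>tuples N K. q js * D js a (map x js))"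
    using PC unfolding C_poly_iff by blast
  have qnn: "0 \<le> q js" if "js \<in> tuples N K" for js using vq that unfolding validq_def by blast
  have q1: "(\<Sum>js\<in>tuples N K. q js) = 1" using vq unfolding validq_def by blast
  have "\<exists>js\<in>tuples N K. 0 < q js"
  proof (rule ccontr)
    assume na: "\<not> (\<exists>js\<in>tuples N K. 0 < q js)"
    have "q js = 0" if "js \<in> tuples N K" for js
    proof -
      have "\<not> 0 < q js" using na that by blast
      then show ?thesis using qnn[OF that] by linarith
    qed
    then have "(\<Sum>js\<in>tuples N K. q js) = 0" by (intro sum.neutral) blast
    then show False using q1 by simp
  qed
  then obtain js0 where js0: "js0 \<in> tuples N K" "0 < q js0" by blast
  have key: "P True x = 1 \<longleftrightarrow> D js0 True (map x js0) = 1" if x: "x \<in> inputs N" for x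
  proof -
    define t where "t js = D js True (map x js)" for js
    have tb: "0 \<le> t js" "t js \<le> 1" if "js \<in> tuples N K" for js
    proof -
      have "0 \<le> D js True (map x js)" "0 \<le> D js False (map x js)" "D js False (map x js) + D js True (map x js) = 1"
        using vD that tuples_len unfolding validD_def by blast+
      then show "0 \<le> t js" "t js \<le> 1" unfolding t_def by auto
    qed
    have Ps: "P True x = (\<Sum>js\<in>tuples N K. q js * t js)" using rp x unfolding t_def by simp
    show ?thesis
    proof
      assume "P True x = 1"
      have "(\<Sum>js\<in>tuples N K. q js * (1 - t js)) = (\<Sum>js\<in>tuples N K. q js - q js * t js)"
        by (simp only: right_diff_distrib mult_1_right)
      also have "\<dots> = (\<Sum>js\<in>tuples N K. q js) - (\<Sum>js\<in>tuples N K. q js * t js)"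
        by (rule sum_subtractf)
      finally have "(\<Sum>js\<in>tuples N K. q js * (1 - t js)) = 0"
        using Ps q1 \<open>P True x = 1\<close> by simp
      moreover have "\<forall>js\<in>tuples N K. 0 \<le> q js * (1 - t js)"
        using qnn tb by (simp add: mult_nonneg_nonneg)
      ultimately have "\<forall>js\<in>tuples N K. q js * (1 - t js) = 0"
        using sum_nonneg_eq_0_iff[OF finite_tuples[of N K], of "\<lambda>js. q js * (1 - t js)"] by simp
      then have "q js0 * (1 - t js0) = 0" using js0 by blast
      then show "D js0 True (map x js0) = 1" using js0 unfolding t_def by simp
    next
      assume h: "D js0 True (map x js0) = 1"
      show "P True x = 1"
      proof (rule ccontr)
        assume "P True x \<noteq> 1"
        then have "P True x = 0" using d x by blast
        then have "(\<Sum>js\<in>tuples N K. q js * t js) = 0" using Ps by simp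
        moreover have "\<forall>js\<in>tuples N K. 0 \<le> q js * t js" using qnn tb by (simp add: mult_nonneg_nonneg)
        ultimately have "\<forall>js\<in>tuples N K. q js * t js = 0"
          using sum_nonneg_eq_0_iff[OF finite_tuples[of N K], of "\<lambda>js. q js * t js"] by simp
        then have "q js0 * t js0 = 0" using js0 by blast
        then show False using js0 h unfolding t_def by simp
      qed
    qed
  qed
  define J where "J = {..<N} - set js0"
  have t0: "length js0 = K" "distinct js0" "set js0 \<subseteq> {..<N}" using js0(1) unfolding tuples_def by auto
  have cJ: "card J = N - K" unfolding J_def
    using card_Diff_subset[OF finite_set t0(3)] distinct_card[OF t0(2)] t0(1) by simp
  have "\<forall>j\<in>J. \<forall>x\<in>inputs N. (P True (x(j := \<not> x j)) = 1) = (P True x = 1)"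
  proof (intro ballI)
    fix j x assume j: "j \<in> J" and x: "x \<in> inputs N"
    have "j < N" using j unfolding J_def by simp
    then have x': "x(j := \<not> x j) \<in> inputs N" by (rule inputs_flip[OF x])
    have m: "map (x(j := \<not> x j)) js0 = map x js0" using j unfolding J_def by (intro map_cong) auto
    show "(P True (x(j := \<not> x j)) = 1) = (P True x = 1)" unfolding key[OF x] key[OF x'] m by (rule refl)
  qed
  moreover have "J \<subseteq> {..<N}" unfolding J_def by blast
  ultimately show ?thesis unfolding is_junta_def using cJ by blast
qed




lemma det_points: "det_behavior N f \<in> points N"
  unfolding det_behavior_def points_def by auto

lemma vertex_iff:
  assumes KN: "K \<le> N" and Pp: "P \<in> points N"
  shows "vertex_of P (C_poly N K) \<longleftrightarrow>
     (\<exists>f. is_junta N K f \<and> (\<forall>a. \<forall>x\<in>inputs N. P a x = (if a = f x then 1 else 0)))"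
proof
  assume v: "vertex_of P (C_poly N K)"
  have PC: "P \<in> C_poly N K" using v unfolding vertex_of_def by blast
  have Pb: "P \<in> behaviors N" using PC C_sub by blast
  have d: "\<forall>x\<in>inputs N. P True x = 0 \<or> P True x = 1" using vertex_det[OF v] by blast
  have j: "is_junta N K (\<lambda>x. P True x = 1)" by (rule vertex_junta[OF KN PC d])
  have "\<forall>a. \<forall>x\<in>inputs N. P a x = (if a = (P True x = 1) then 1 else 0)"
  proof (intro allI ballI)
    fix a x assume x: "x \<in> inputs N"
    have s: "P False x + P True x = 1" using Pb x unfolding behaviors_def by blast
    show "P a x = (if a = (P True x = 1) then 1 else 0)"
      using d x s by (cases a) auto
  qed
  then show "\<exists>f. is_junta N K f \<and> (\<forall>a. \<forall>x\<in>inputs N. P a x = (if a = f x then 1 else 0))"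
    using j by blast
next
  assume "\<exists>f. is_junta N K f \<and> (\<forall>a. \<forall>x\<in>inputs N. P a x = (if a = f x then 1 else 0))"
  then obtain f where f: "is_junta N K f" and pf: "\<forall>a. \<forall>x\<in>inputs N. P a x = (if a = f x then 1 else 0)"
    by blast
  have "P = det_behavior N f"
    by (rule points_ext[OF Pp det_points]) (use pf in \<open>simp add: det_behavior_def\<close>)
  then have PC: "P \<in> C_poly N K" using junta_in_C[OF KN f] by simp
  have P01: "\<forall>a. \<forall>x\<in>inputs N. P a x = 0 \<or> P a x = 1" using pf by simp
  show "vertex_of P (C_poly N K)"
    unfolding vertex_of_def
  proof (intro conjI ballI allI impI)
    show "P \<in> C_poly N K" by (rule PC)
    fix Q R u assume Q: "Q \<in> C_poly N K" and R: "R \<in> C_poly N K" and h: "Q \<noteq> R \<and> 0 < u \<and> u < (1::real)"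
    show "P \<noteq> (\<lambda>a x. (1 - u) * Q a x + u * R a x)"
    proof
      assume e: "P = (\<lambda>a x. (1 - u) * Q a x + u * R a x)"
      have "Q \<in> behaviors N" "R \<in> behaviors N" using Q R C_sub by blast+
      from det_extreme[OF P01 this _ _ e] h show False by blast
    qed
  qed
qed


lemma vertex_points: "vertex_of P (C_poly N K) \<Longrightarrow> P \<in> points N"
  unfolding vertex_of_def using C_sub by blast

lemma bij_part:
  assumes KN: "K \<le> N"
  shows "bij_betw (det_behavior N) (juntas N K) {P. vertex_of P (C_poly N K)}"
proof (rule bij_betw_imageI)
  show "inj_on (det_behavior N) (juntas N K)"
  proof (rule inj_onI)
    fix f g assume f: "f \<in> juntas N K" and g: "g \<in> juntas N K" and e: "det_behavior N f = det_behavior N g"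
    show "f = g"
    proof
      fix x show "f x = g x"
      proof (cases "x \<in> inputs N")
        case True
        have "det_behavior N f True x = det_behavior N g True x" using e by simp
        then show ?thesis using True unfolding det_behavior_def by (auto split: if_splits)
      next
        case False
        then show ?thesis using f g unfolding juntas_def by simp
      qed
    qed
  qed
  show "det_behavior N ` juntas N K = {P. vertex_of P (C_poly N K)}"
  proof
    show "det_behavior N ` juntas N K \<subseteq> {P. vertex_of P (C_poly N K)}"
    proof
      fix P assume "P \<in> det_behavior N ` juntas N K"
      then obtain f where f: "f \<in> juntas N K" and P: "P = det_behavior N f" by blast
      have "\<exists>f. is_junta N K f \<and> (\<forall>a. \<forall>x\<in>inputs N. P a x = (if a = f x then 1 else 0))"
        using f P unfolding juntas_def det_behavior_def by auto
      then show "P \<in> {P. vertex_of P (C_poly N K)}"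
        using vertex_iff[OF KN det_points] P by simp
    qed
    show "{P. vertex_of P (C_poly N K)} \<subseteq> det_behavior N ` juntas N K"
    proof
      fix P assume "P \<in> {P. vertex_of P (C_poly N K)}"
      then have v: "vertex_of P (C_poly N K)" by simp
      have Pp: "P \<in> points N" using vertex_points[OF v] .
      obtain f where f: "is_junta N K f" and pf: "\<forall>a. \<forall>x\<in>inputs N. P a x = (if a = f x then 1 else 0)"
        using vertex_iff[OF KN Pp] v by blast
      define f' where "f' x = (x \<in> inputs N \<and> f x)" for x
      have "is_junta N K f'"
      proof -
        obtain J where J: "J \<subseteq> {..<N}" "card J = N - K" "\<forall>j\<in>J. \<forall>x\<in>inputs N. f (x(j := \<not> x j)) = f x"
          using f unfolding is_junta_def by blast
        have "\<forall>j\<in>J. \<forall>x\<in>inputs N. f' (x(j := \<not> x j)) = f' x"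
        proof (intro ballI)
          fix j x assume j: "j \<in> J" and x: "x \<in> inputs N"
          have "j < N" using j J(1) by blast
          then have "x(j := \<not> x j) \<in> inputs N" by (rule inputs_flip[OF x])
          then show "f' (x(j := \<not> x j)) = f' x" using x j J(3) unfolding f'_def by simp
        qed
        then show ?thesis unfolding is_junta_def using J(1,2) by blast
      qed
      then have f'j: "f' \<in> juntas N K" unfolding juntas_def f'_def by simp
      have "P = det_behavior N f'"
        by (rule points_ext[OF Pp det_points]) (use pf in \<open>simp add: det_behavior_def f'_def\<close>)
      then show "P \<in> det_behavior N ` juntas N K" using f'j by blast
    qed
  qed
qed

theorem mainTheorem1:
  fixes N K :: nat
  assumes "1 \<le> N" and "1 \<le> K" and "K \<le> N"
  shows "(\<forall>P\<in>behaviors N. vertex_of P (C_poly N K) \<longleftrightarrow>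
            (\<exists>f. is_junta N K f \<and>
               (\<forall>a. \<forall>x\<in>inputs N. P a x = (if a = f x then 1 else 0))))
       \<and> bij_betw (det_behavior N) (juntas N K) {P. vertex_of P (C_poly N K)}
       \<and> int (card {P. vertex_of P (C_poly N K)}) =
           (\<Sum>k=0..K. int (N choose k) *
              (\<Sum>r=0..k. (-1) ^ (k - r) * int (k choose r) * 2 ^ (2 ^ r)))"
proof (intro conjI ballI)
  fix P assume "P \<in> behaviors N"
  then have "P \<in> points N" using C_sub by blast
  then show "vertex_of P (C_poly N K) \<longleftrightarrow>
            (\<exists>f. is_junta N K f \<and> (\<forall>a. \<forall>x\<in>inputs N. P a x = (if a = f x then 1 else 0)))"
    by (rule vertex_iff[OF assms(3)])
next
  show b: "bij_betw (det_behavior N) (juntas N K) {P. vertex_of P (C_poly N K)}"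
    by (rule bij_part[OF assms(3)])
  have "card {P. vertex_of P (C_poly N K)} = card (juntas N K)"
    using bij_betw_same_card[OF b] by simp
  then show "int (card {P. vertex_of P (C_poly N K)}) =
           (\<Sum>k=0..K. int (N choose k) *
              (\<Sum>r=0..k. (-1) ^ (k - r) * int (k choose r) * 2 ^ (2 ^ r)))"
    using card_juntas[OF assms(3)] unfolding ee_def by simp
qed


end
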